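(* Let $H_{\mathcal L,\Theta}$ be a Hamburger Hamiltonian with $N<\infty$ and let $m$ be its Weyl--Titchmarsh function. Let $\kappa$ be the number of $k\in\{1,\dots,N\}$ with $\theta_k\notin\pi\mathbb Z$, and for $j\in\{0,\dots,\kappa\}$ let $k(j)$ be the largest integer $k\in\{0,\dots,N\}$ such that exactly $j$ of $\theta_0,\dots,\theta_{k-1}$ are not in $\pi\mathbb Z$. Define $l_j:=\ell_{k(j)}\sin^2(\theta_{k(j)})$ for $j\in\{0,\dots,\kappa\}$ and, for $j\in\{0,\dots,\kappa-1\}$, $\omega_j:=\cot(\theta_{k(j+1)})-\cot(\theta_{k(j)})$ and $\upsilon_j:=0$ if $k(j+1)-k(j)=1$, $\upsilon_j:=\ell_{k(j)+1}$ if $k(j+1)-k(j)=2$ (these are the only possibilities). Then for all $z\in\mathbb C\setminus\mathbb R$, $$m(z)=\cfrac{1}{-l_0z+\cfrac{1}{\omega_0+\upsilon_0z+\cfrac{1}{\ddots+\cfrac{1}{\omega_{\kappa-1}+\upsilon_{\kappa-1}z+\cfrac{1}{-l_\kappa z}}}}},$$ where $\frac{1}{-l_\kappa z}$ is interpreted as $0$ if $l_\kappa=\infty$.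
   Context: For $\theta\in\mathbb R$ let $H_\theta:=\begin{pmatrix}\cos^2\theta&\cos\theta\sin\theta\\ \cos\theta\sin\theta&\sin^2\theta\end{pmatrix}$. Hamburger Hamiltonian: fix $L\in(0,\infty]$, $N\in\mathbb Z_{\ge0}\cup\{\infty\}$, reals $\{\ell_k\}_{k=0}^{N-1}$ and $\{\theta_k\}_{k=0}^{N}$ with $\theta_0=\pi/2$, $\ell_k>0$ and $\theta_k<\theta_{k+1}<\theta_k+\pi$ for $k\in\{0,\dots,N-1\}$. Set $x_{-1}:=0$, $x_k:=x_{k-1}+\ell_k$. If $N<\infty$, assume $x_{N-1}<x_N:=L$ (and put $\ell_N:=L-x_{N-1}\in(0,\infty]$) and $\theta_N\notin\pi\mathbb Z$; if $N=\infty$, $L:=\sum_{k\ge0}\ell_k$. Then $H_{\mathcal L,\Theta}(x):=\sum_{k=0}^N H_{\theta_k}\mathbb 1_{[x_{k-1},x_k)}(x)$, $x\in[0,L)$. Its Weyl--Titchmarsh function is $m(z):=\lim_{x\to L}U_{11}(z,x)/U_{12}(z,x)$, $z\in\mathbb C\setminus\mathbb R$, where $U(z,\cdot)$ solves $U(z,x)=I-z\int_0^xJH_{\mathcal L,\Theta}(t)U(z,t)\,dt$, $J=\begin{pmatrix}0&1\\-1&0\end{pmatrix}$. *)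

theory Defs
  imports "HOL-Analysis.Analysis"
begin

definition inPiZ :: "real \<Rightarrow> bool" where
  "inPiZ t \<longleftrightarrow> (\<exists>n::int. t = of_int n * pi)"

definition Hth :: "real \<Rightarrow> complex^2^2" where
  "Hth t = (\<chi> i j. complex_of_real ((if i = 1 then cos t else sin t) * (if j = 1 then cos t else sin t)))"

definition Jmat :: "complex^2^2" where
  "Jmat = (\<chi> i j. if i = 1 \<and> j = 2 then 1 else if i = 2 \<and> j = 1 then -1 else 0)"

text \<open>Partition points: xpt ell k = x_{k-1} = sum of ell_i for i < k.\<close>
definition xpt :: "(nat \<Rightarrow> real) \<Rightarrow> nat \<Rightarrow> real" where
  "xpt ell k = (\<Sum>i<k. ell i)"

definition hamH :: "nat \<Rightarrow> (nat \<Rightarrow> real) \<Rightarrow> (nat \<Rightarrow> real) \<Rightarrow> real \<Rightarrow> complex^2^2" where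
  "hamH N ell th x =
     (\<Sum>k<N. (if xpt ell k \<le> x \<and> x < xpt ell (Suc k) then Hth (th k) else 0))
     + (if xpt ell N \<le> x then Hth (th N) else 0)"

definition scaleM :: "complex \<Rightarrow> complex^2^2 \<Rightarrow> complex^2^2" where
  "scaleM c M = (\<chi> i j. c * M $ i $ j)"

definition solves_U :: "nat \<Rightarrow> (nat \<Rightarrow> real) \<Rightarrow> (nat \<Rightarrow> real) \<Rightarrow> ereal \<Rightarrow> complex \<Rightarrow> (real \<Rightarrow> complex^2^2) \<Rightarrow> bool" where
  "solves_U N ell th L z U \<longleftrightarrow>
     (\<forall>x. 0 \<le> x \<and> ereal x < L \<longrightarrow>
        (\<lambda>t. Jmat ** hamH N ell th t ** U t) integrable_on {0..x} \<and>
        U x = mat 1 - scaleM z (integral {0..x} (\<lambda>t. Jmat ** hamH N ell th t ** U t)))"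

definition toL :: "ereal \<Rightarrow> real filter" where
  "toL L = (if L = \<infinity> then at_top else at_left (real_of_ereal L))"

definition cntNZ :: "(nat \<Rightarrow> real) \<Rightarrow> nat \<Rightarrow> nat" where
  "cntNZ th k = card {i. i < k \<and> \<not> inPiZ (th i)}"

definition kappa :: "nat \<Rightarrow> (nat \<Rightarrow> real) \<Rightarrow> nat" where
  "kappa N th = card {k. 1 \<le> k \<and> k \<le> N \<and> \<not> inPiZ (th k)}"

definition kj :: "nat \<Rightarrow> (nat \<Rightarrow> real) \<Rightarrow> nat \<Rightarrow> nat" where
  "kj N th j = (GREATEST k. k \<le> N \<and> cntNZ th k = j)"

definition lj :: "nat \<Rightarrow> (nat \<Rightarrow> real) \<Rightarrow> (nat \<Rightarrow> real) \<Rightarrow> nat \<Rightarrow> real" where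
  "lj N ell th j = ell (kj N th j) * (sin (th (kj N th j)))^2"

definition omegaj :: "nat \<Rightarrow> (nat \<Rightarrow> real) \<Rightarrow> nat \<Rightarrow> real" where
  "omegaj N th j = cot (th (kj N th (Suc j))) - cot (th (kj N th j))"

definition upsj :: "nat \<Rightarrow> (nat \<Rightarrow> real) \<Rightarrow> (nat \<Rightarrow> real) \<Rightarrow> nat \<Rightarrow> real" where
  "upsj N ell th j = (if kj N th (Suc j) - kj N th j = 2 then ell (kj N th j + 1) else 0)"

text \<open>contfrac a b t n = 1/(a0 + 1/(b0 + 1/(a1 + 1/(b1 + ... 1/(b_{n-1} + t))))).\<close>
primrec contfrac :: "(nat \<Rightarrow> complex) \<Rightarrow> (nat \<Rightarrow> complex) \<Rightarrow> complex \<Rightarrow> nat \<Rightarrow> complex" where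
  "contfrac a b t 0 = t"
| "contfrac a b t (Suc n) =
     1 / (a 0 + 1 / (b 0 + contfrac (\<lambda>i. a (Suc i)) (\<lambda>i. b (Suc i)) t n))"

text \<open>The last term 1/(-l_kappa z), with l_kappa = (L - x_{N-1}) sin^2 theta_N, read as 0 if L = infinity.\<close>
definition lastTerm :: "nat \<Rightarrow> (nat \<Rightarrow> real) \<Rightarrow> (nat \<Rightarrow> real) \<Rightarrow> ereal \<Rightarrow> complex \<Rightarrow> complex" where
  "lastTerm N ell th L z = (if L = \<infinity> then 0
     else 1 / (- complex_of_real ((real_of_ereal L - xpt ell N) * (sin (th N))^2) * z))"

definition cfWT :: "nat \<Rightarrow> (nat \<Rightarrow> real) \<Rightarrow> (nat \<Rightarrow> real) \<Rightarrow> ereal \<Rightarrow> complex \<Rightarrow> complex" where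
  "cfWT N ell th L z = contfrac
      (\<lambda>j. - complex_of_real (lj N ell th j) * z)
      (\<lambda>j. complex_of_real (omegaj N th j) + complex_of_real (upsj N ell th j) * z)
      (lastTerm N ell th L z) (kappa N th)"

end

theory Submission
  imports Defs
begin


definition mk :: "complex \<Rightarrow> complex \<Rightarrow> complex \<Rightarrow> complex \<Rightarrow> complex^2^2" where
  "mk a b c d = (\<chi> i j. if i = 1 then (if j = 1 then a else b) else (if j = 1 then c else d))"

lemma two_ne_one: "(2::2) \<noteq> 1" by simp

lemma mk_nth[simp]: "mk a b c d $ 1 $ 1 = a" "mk a b c d $ 1 $ 2 = b"
  "mk a b c d $ 2 $ 1 = c" "mk a b c d $ 2 $ 2 = d"
  by (simp_all add: mk_def)

lemma mk_eta: "A = mk (A$1$1) (A$1$2) (A$2$1) (A$2$2)"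
  unfolding mk_def vec_eq_iff forall_2 by simp

lemma mk_mult[simp]: "mk a b c d ** mk a' b' c' d' = mk (a*a'+b*c') (a*b'+b*d') (c*a'+d*c') (c*b'+d*d')"
  by (simp add: mk_def matrix_matrix_mult_def vec_eq_iff forall_2 sum_2)

lemma mk_eq_iff: "mk a b c d = mk a' b' c' d' \<longleftrightarrow> a=a' \<and> b=b' \<and> c=c' \<and> d=d'"
  by (metis mk_nth)

lemma mk_diff[simp]: "mk a b c d - mk a' b' c' d' = mk (a-a') (b-b') (c-c') (d-d')"
  by (simp add: mk_def vec_eq_iff forall_2)

lemma mk_scaleM[simp]: "scaleM w (mk a b c d) = mk (w*a) (w*b) (w*c) (w*d)"
  by (simp add: mk_def scaleM_def vec_eq_iff forall_2)

lemma mat1_mk: "mat 1 = mk 1 0 0 1"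
  by (simp add: mk_def mat_def vec_eq_iff forall_2)

lemma Jmat_mk: "Jmat = mk 0 1 (-1) 0"
  by (simp add: mk_def Jmat_def vec_eq_iff forall_2)

lemma Hth_mk: "Hth t = mk ((cos t)^2) (cos t * sin t) (cos t * sin t) ((sin t)^2)"
  by (simp add: mk_def Hth_def vec_eq_iff forall_2 power2_eq_square)

lemma zero_mk: "(0::complex^2^2) = mk 0 0 0 0"
  by (simp add: mk_def vec_eq_iff forall_2)

lemma scaleM_add: "scaleM w (A + B) = scaleM w A + scaleM w B"
  by (simp add: scaleM_def vec_eq_iff distrib_left)

lemma cscaleR: "r *\<^sub>R (c::complex) = complex_of_real r * c"
  by (simp add: scaleR_conv_of_real)

lemma scaleM_scaleR: "scaleM w (r *\<^sub>R A) = scaleM (w * of_real r) A"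
  by (simp add: scaleM_def vec_eq_iff cscaleR mult.assoc)

lemma mult_scaleM: "A ** scaleM w B = scaleM w (A ** B)"
  by (simp add: scaleM_def vec_eq_iff matrix_matrix_mult_def sum_distrib_left algebra_simps)

lemma JH_nil: "(Jmat ** Hth t) ** (Jmat ** Hth t) = 0"
  by (simp add: Jmat_mk Hth_mk zero_mk mk_eq_iff algebra_simps power2_eq_square)

lemma linear_lmult: "linear (\<lambda>X::complex^2^2. A ** X)"
  by (rule linearI) (simp_all add: matrix_add_ldistrib vec_eq_iff matrix_matrix_mult_def sum_distrib_left cscaleR sum.distrib algebra_simps)



lemma scaleM_diff: "scaleM w (A - B) = scaleM w A - scaleM w B"
  by (simp add: scaleM_def vec_eq_iff algebra_simps)

lemma matrix_sub_ldistrib: "A ** (B - C) = A ** B - A ** (C::complex^2^2)"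
  using linear_diff[OF linear_lmult[of A]] by simp

lemma interval_step:
  assumes sol: "solves_U N ell th L z U"
    and a0: "0 \<le> a" and ax: "a \<le> x" and xb: "x \<le> b" and xL: "ereal x < L"
    and Hc: "\<And>t. a \<le> t \<Longrightarrow> t < b \<Longrightarrow> hamH N ell th t = H"
    and nil: "(Jmat ** H) ** (Jmat ** H) = 0"
  shows "U x = U a - scaleM (z * of_real (x - a)) (Jmat ** H ** U a)"
proof -
  define f where "f = (\<lambda>t. Jmat ** hamH N ell th t ** U t)"
  have eq: "U y = U a - scaleM z (integral {a..y} f)" and intg: "f integrable_on {a..y}"
    if "a \<le> y" "y \<le> x" for y
  proof -
    have yL: "ereal y < L" using xL that by (meson ereal_less_eq(3) order_le_less_trans)
    have aL: "ereal a < L" using xL that ax by (meson ereal_less_eq(3) order_le_less_trans)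
    have iy: "f integrable_on {0..y}" and Uy: "U y = mat 1 - scaleM z (integral {0..y} f)"
      using sol yL a0 that unfolding solves_U_def f_def by auto
    have Ua: "U a = mat 1 - scaleM z (integral {0..a} f)"
      using sol aL a0 unfolding solves_U_def f_def by auto
    have c: "integral {0..a} f + integral {a..y} f = integral {0..y} f"
      using Henstock_Kurzweil_Integration.integral_combine[OF _ _ iy, of a] a0 that by auto
    show "f integrable_on {a..y}"
      by (rule integrable_subinterval_real[OF iy]) (use a0 in auto)
    show "U y = U a - scaleM z (integral {a..y} f)"
      unfolding Uy Ua c[symmetric] scaleM_add by simp
  qed
  have const: "Jmat ** H ** U y = Jmat ** H ** U a" if "a \<le> y" "y < b" "y \<le> x" for y
  proof -
    have "Jmat ** H ** U y = Jmat ** H ** U a - scaleM z ((Jmat ** H) ** integral {a..y} f)"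
      using eq[OF that(1) that(3)] by (simp add: matrix_sub_ldistrib mult_scaleM)
    also have "(Jmat ** H) ** integral {a..y} f = integral {a..y} ((\<lambda>X. (Jmat ** H) ** X) \<circ> f)"
      by (rule integral_linear[symmetric, OF intg[OF that(1) that(3)]])
         (rule linear_conv_bounded_linear[THEN iffD1, OF linear_lmult])
    also have "\<dots> = integral {a..y} (\<lambda>t. 0)"
    proof (rule integral_cong)
      fix t assume t: "t \<in> {a..y}"
      have "f t = Jmat ** H ** U t" unfolding f_def using Hc[of t] t that by auto
      then show "((\<lambda>X. (Jmat ** H) ** X) \<circ> f) t = 0"
        by (simp add: matrix_mul_assoc) (metis matrix_mul_assoc nil times0_left)
    qed
    finally show ?thesis by (simp add: scaleM_def vec_eq_iff)
  qed
  have ci: "((\<lambda>t. Jmat ** H ** U a) has_integral ((x - a) *\<^sub>R (Jmat ** H ** U a))) {a..x}"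
    using has_integral_const_real[of "Jmat ** H ** U a" a x] ax by (simp add: content_real)
  have "(f has_integral ((x - a) *\<^sub>R (Jmat ** H ** U a))) {a..x}"
  proof (rule has_integral_spike_finite[where S="{x}"])
    fix t assume t: "t \<in> {a..x} - {x}"
    then have "f t = Jmat ** H ** U t" unfolding f_def using Hc[of t] xb by auto
    also have "\<dots> = Jmat ** H ** U a" using const[of t] t xb by auto
    finally show "f t = Jmat ** H ** U a" .
  qed (use ci in auto)
  then have "integral {a..x} f = (x - a) *\<^sub>R (Jmat ** H ** U a)"
    by (simp add: integral_unique)
  then show ?thesis using eq[OF ax order_refl] by (simp add: scaleM_scaleR)
qed



definition Mblk :: "complex \<Rightarrow> real \<Rightarrow> real \<Rightarrow> complex^2^2" where
  "Mblk z l t = mk (1 - z * of_real l * of_real (cos t) * of_real (sin t)) (- z * of_real l * (of_real (sin t))^2)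
      (z * of_real l * (of_real (cos t))^2) (1 + z * of_real l * of_real (cos t) * of_real (sin t))"

lemma Mblk_step: "A - scaleM (z * of_real l) (Jmat ** Hth t ** A) = Mblk z l t ** A"
  apply (subst (1 2 3) mk_eta[of A])
  by (simp add: Jmat_mk Hth_mk Mblk_def mk_eq_iff algebra_simps power2_eq_square)

lemma xpt_mono: assumes "\<And>k. k < N \<Longrightarrow> ell k > 0" "m \<le> n" "n \<le> N"
  shows "xpt ell m \<le> xpt ell n"
  unfolding xpt_def using assms
  by (intro sum_mono2) (auto intro: less_imp_le)

lemma xpt_Suc: "xpt ell (Suc k) = xpt ell k + ell k"
  by (simp add: xpt_def)

lemma xpt_nonneg: assumes "\<And>k. k < N \<Longrightarrow> ell k > 0" "n \<le> N" shows "0 \<le> xpt ell n"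
  using xpt_mono[OF assms(1) _ assms(2), where m=0] by (simp add: xpt_def)

lemma hamH_in:
  assumes pos: "\<And>k. k < N \<Longrightarrow> ell k > 0" and k: "k < N"
    and t: "xpt ell k \<le> t" "t < xpt ell (Suc k)"
  shows "hamH N ell th t = Hth (th k)"
proof -
  have z: "(if xpt ell i \<le> t \<and> t < xpt ell (Suc i) then Hth (th i) else 0) = 0"
    if "i < N" "i \<noteq> k" for i
  proof (cases "i < k")
    case True
    then have "xpt ell (Suc i) \<le> xpt ell k" using xpt_mono[where N=N and ell=ell, OF pos, where m="Suc i" and n=k] k by auto
    then show ?thesis using t by auto
  next
    case False
    then have "xpt ell (Suc k) \<le> xpt ell i" using xpt_mono[where N=N and ell=ell, OF pos, where m="Suc k" and n=i] that by auto
    then show ?thesis using t by auto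
  qed
  have s: "(\<Sum>i<N. (if xpt ell i \<le> t \<and> t < xpt ell (Suc i) then Hth (th i) else 0)) = Hth (th k)"
    using sum.remove[of "{..<N}" k "\<lambda>i. (if xpt ell i \<le> t \<and> t < xpt ell (Suc i) then Hth (th i) else 0)"] k t z
    by (simp add: sum.neutral)
  have "xpt ell (Suc k) \<le> xpt ell N" using xpt_mono[where N=N and ell=ell, OF pos, where m="Suc k" and n=N] k by auto
  then show ?thesis unfolding hamH_def s using t by auto
qed

lemma hamH_last:
  assumes pos: "\<And>k. k < N \<Longrightarrow> ell k > 0" and t: "xpt ell N \<le> t"
  shows "hamH N ell th t = Hth (th N)"
proof -
  have z: "(if xpt ell i \<le> t \<and> t < xpt ell (Suc i) then Hth (th i) else 0) = 0"
    if "i < N" for i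
  proof -
    have "xpt ell (Suc i) \<le> xpt ell N" using xpt_mono[where N=N and ell=ell, OF pos, where m="Suc i" and n=N] that by auto
    then show ?thesis using t by auto
  qed
  show ?thesis unfolding hamH_def using z t by (simp add: sum.neutral)
qed

primrec Pm :: "complex \<Rightarrow> (nat \<Rightarrow> real) \<Rightarrow> (nat \<Rightarrow> real) \<Rightarrow> nat \<Rightarrow> complex^2^2" where
  "Pm z ell th 0 = mat 1"
| "Pm z ell th (Suc k) = Mblk z (ell k) (th k) ** Pm z ell th k"

lemma U_at:
  assumes pos: "\<And>k. k < N \<Longrightarrow> ell k > 0" and LL: "ereal (xpt ell N) < L"
    and sol: "solves_U N ell th L z U" and k: "k \<le> N"
  shows "U (xpt ell k) = Pm z ell th k"
  using k
proof (induction k)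
  case 0
  have "0 \<le> xpt ell N" by (rule xpt_nonneg[where N=N]) (use pos in auto)
  then have "ereal 0 < L" using LL
    by (meson ereal_less_eq(3) order_le_less_trans)
  then have "U 0 = mat 1 - scaleM z (integral {0..0} (\<lambda>t. Jmat ** hamH N ell th t ** U t))"
    using sol unfolding solves_U_def by auto
  then show ?case by (simp add: xpt_def scaleM_def vec_eq_iff mat_def)
next
  case (Suc k)
  have kN: "k < N" using Suc by auto
  have xl: "ereal (xpt ell (Suc k)) < L" using LL xpt_mono[where N=N and ell=ell, OF pos Suc.prems order_refl]
    by (meson ereal_less_eq(3) order_le_less_trans)
  have "U (xpt ell (Suc k)) = U (xpt ell k) - scaleM (z * of_real (xpt ell (Suc k) - xpt ell k))
          (Jmat ** Hth (th k) ** U (xpt ell k))"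
    by (rule interval_step[OF sol xpt_nonneg[where N=N and ell=ell and n=k, OF pos] _ order_refl xl])
       (use kN pos in \<open>auto simp: xpt_Suc intro: less_imp_le hamH_in JH_nil\<close>)
  also have "\<dots> = Mblk z (ell k) (th k) ** U (xpt ell k)"
    by (simp add: xpt_Suc Mblk_step)
  finally show ?case using Suc kN by simp
qed

lemma U_last:
  assumes pos: "\<And>k. k < N \<Longrightarrow> ell k > 0" and LL: "ereal (xpt ell N) < L"
    and sol: "solves_U N ell th L z U" and x: "xpt ell N \<le> x" "ereal x < L"
  shows "U x = Mblk z (x - xpt ell N) (th N) ** Pm z ell th N"
proof -
  have "U x = U (xpt ell N) - scaleM (z * of_real (x - xpt ell N))
          (Jmat ** Hth (th N) ** U (xpt ell N))"
    by (rule interval_step[OF sol xpt_nonneg[where N=N and ell=ell and n=N, OF pos] x(1) order_refl x(2)])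
       (use pos in \<open>auto intro: hamH_last JH_nil\<close>)
  also have "\<dots> = Mblk z (x - xpt ell N) (th N) ** U (xpt ell N)"
    by (simp only: Mblk_step)
  finally show ?thesis using U_at[OF pos LL sol order_refl] by simp
qed



definition St :: "real \<Rightarrow> complex^2^2" where "St g = mk 1 0 (of_real g) 1"

lemma sin2_cot: "sin t \<noteq> 0 \<Longrightarrow> (sin t)^2 * cot t = cos t * sin t"
  by (simp add: cot_def power2_eq_square field_simps)
lemma sin2_cot2: "sin t \<noteq> 0 \<Longrightarrow> (sin t)^2 * (cot t)^2 = (cos t)^2"
  by (simp add: cot_def power2_eq_square field_simps)

lemma block1:
  assumes s: "sin t \<noteq> 0"
  shows "St g' ** (Mblk z l t ** P) =
     mk 1 0 (of_real (g' - cot t)) 1 ** mk 1 (- z * of_real (l * (sin t)^2)) 0 1 ** (St (cot t) ** P)"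
proof -
  have cs: "complex_of_real (cos t) * complex_of_real (sin t) = of_real ((sin t)^2 * cot t)"
    using sin2_cot[OF s] by (metis of_real_mult)
  have c2: "(complex_of_real (cos t))^2 = of_real ((sin t)^2 * (cot t)^2)"
    using sin2_cot2[OF s] by (metis of_real_power)
  have "St g' ** Mblk z l t =
     mk 1 0 (of_real (g' - cot t)) 1 ** mk 1 (- z * of_real (l * (sin t)^2)) 0 1 ** St (cot t)"
    unfolding St_def Mblk_def
    apply (simp add: mk_eq_iff)
    apply (simp only: mult.assoc cs c2 of_real_mult of_real_power of_real_diff)
    apply (simp add: algebra_simps power2_eq_square)
    done
  then show ?thesis by (simp add: matrix_mul_assoc)
qed

lemma block2:
  assumes s: "sin t \<noteq> 0" and s1: "sin t1 = 0"
  shows "St g' ** (Mblk z l1 t1 ** (Mblk z l t ** P)) =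
     mk 1 0 (of_real (g' - cot t) + of_real l1 * z) 1 ** mk 1 (- z * of_real (l * (sin t)^2)) 0 1 ** (St (cot t) ** P)"
proof -
  have c1: "(complex_of_real (cos t1))^2 = 1"
    using s1 sin_cos_squared_add[of t1] by (metis add_0 of_real_1 of_real_power power2_eq_square mult_zero_left)
  have M1: "Mblk z l1 t1 = mk 1 0 (z * of_real l1) 1"
    unfolding Mblk_def using s1 c1 by simp
  have "St g' ** Mblk z l1 t1 = St (g' + 0) ** mk 1 0 (z * of_real l1) 1" by (simp add: M1)
  also have "\<dots> = mk 1 0 (of_real l1 * z) 1 ** St g'" by (simp add: St_def mk_eq_iff algebra_simps)
  finally have e: "St g' ** Mblk z l1 t1 = mk 1 0 (of_real l1 * z) 1 ** St g'" .
  have "St g' ** (Mblk z l1 t1 ** (Mblk z l t ** P)) = mk 1 0 (of_real l1 * z) 1 ** (St g' ** (Mblk z l t ** P))"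
    by (simp add: matrix_mul_assoc e)
  also have "\<dots> = mk 1 0 (of_real (g' - cot t) + of_real l1 * z) 1 ** mk 1 (- z * of_real (l * (sin t)^2)) 0 1 ** (St (cot t) ** P)"
    unfolding block1[OF s] by (simp add: matrix_mul_assoc algebra_simps)
  finally show ?thesis .
qed

primrec Bg :: "(nat \<Rightarrow> complex) \<Rightarrow> (nat \<Rightarrow> complex) \<Rightarrow> nat \<Rightarrow> complex^2^2" where
  "Bg a b 0 = mat 1"
| "Bg a b (Suc n) = mk 1 0 (b n) 1 ** mk 1 (a n) 0 1 ** Bg a b n"

lemma contfrac_Suc_inner:
  "contfrac a b t (Suc n) = contfrac a b (1 / (a n + 1 / (b n + t))) n"
  by (induction n arbitrary: a b) auto

definition rowmul :: "complex \<times> complex \<Rightarrow> complex^2^2 \<Rightarrow> complex \<times> complex" where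
  "rowmul v M = (fst v * M$1$1 + snd v * M$2$1, fst v * M$1$2 + snd v * M$2$2)"

lemma rowmul_mult: "rowmul (rowmul v A) B = rowmul v (A ** B)"
  by (simp add: rowmul_def matrix_matrix_mult_def sum_2 algebra_simps)

lemma Im_inverse_sign: "Im (1 / w) = - Im w / (cmod w)^2"
  by (simp add: Im_divide cmod_power2)

lemma cf_lemma:
  assumes a: "\<And>i. i < n \<Longrightarrow> Im (a i) * Im z < 0"
    and b: "\<And>i. i < n \<Longrightarrow> b i \<noteq> 0 \<and> Im (b i) * Im z \<ge> 0"
    and q: "q \<noteq> 0" and t: "t = p / q" and adm: "Im t * Im z > 0 \<or> t = 0"
  shows "snd (rowmul (p, q) (Bg a b n)) \<noteq> 0 \<and>
         fst (rowmul (p, q) (Bg a b n)) / snd (rowmul (p, q) (Bg a b n)) = contfrac a b t n"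
  using a b q t adm
proof (induction n arbitrary: p q t)
  case 0
  then show ?case by (simp add: rowmul_def mat1_mk)
next
  case (Suc n)
  define p' where "p' = p + q * b n"
  define q' where "q' = p' * a n + q"
  have bn: "b n \<noteq> 0" "Im (b n) * Im z \<ge> 0" "Im (a n) * Im z < 0" using Suc.prems by auto
  have bt: "b n + t \<noteq> 0"
  proof
    assume h: "b n + t = 0"
    show False
    proof (cases "t = 0")
      case True then show False using h bn by simp
    next
      case False
      then have "Im t * Im z > 0" using Suc.prems by auto
      moreover have "Im (b n + t) * Im z = Im (b n) * Im z + Im t * Im z" by (simp add: algebra_simps)
      ultimately show False using h bn by auto
    qed
  qed
  have p'eq: "p' = q * (b n + t)" unfolding p'_def using Suc.prems by (simp add: field_simps)
  have Iinv: "Im (1 / (b n + t)) * Im z \<le> 0"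
  proof -
    have "Im (b n + t) * Im z \<ge> 0" using Suc.prems bn by (auto simp: algebra_simps)
    moreover have "Im (1 / (b n + t)) * Im z = - (Im (b n + t) * Im z) / (cmod (b n + t))^2"
      unfolding Im_inverse_sign by (simp add: algebra_simps)
    ultimately show ?thesis by (simp add: divide_nonneg_nonneg)
  qed
  define D where "D = a n + 1 / (b n + t)"
  have ImD: "Im D * Im z < 0" unfolding D_def using Iinv bn by (simp add: algebra_simps)
  then have D0: "D \<noteq> 0" by auto
  have q'eq: "q' = q * (b n + t) * D" unfolding q'_def p'eq D_def using bt by (simp add: field_simps)
  have q'0: "q' \<noteq> 0" using q'eq Suc.prems bt D0 by simp
  have t'eq: "1 / D = p' / q'" unfolding q'eq p'eq using Suc.prems bt D0 by simp
  have adm': "Im (1 / D) * Im z > 0"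
  proof -
    have "cmod D ^ 2 > 0" using D0 by simp
    moreover have "Im (1 / D) * Im z = - (Im D * Im z) / (cmod D)^2"
      unfolding Im_inverse_sign by simp
    ultimately show ?thesis using ImD by (simp add: divide_neg_pos)
  qed
  have rm: "rowmul (p, q) (Bg a b (Suc n)) = rowmul (p', q') (Bg a b n)"
    by (simp add: rowmul_mult[symmetric] matrix_mul_assoc) (simp add: rowmul_def p'_def q'_def algebra_simps)
  have IH: "snd (rowmul (p', q') (Bg a b n)) \<noteq> 0 \<and>
         fst (rowmul (p', q') (Bg a b n)) / snd (rowmul (p', q') (Bg a b n)) = contfrac a b (1/D) n"
    by (rule Suc.IH) (use Suc.prems q'0 t'eq adm' in auto)
  show ?case unfolding rm contfrac_Suc_inner using IH unfolding D_def by simp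
qed



lemma inPiZ_sin: "inPiZ t \<longleftrightarrow> sin t = 0"
  unfolding inPiZ_def sin_zero_iff_int2 by simp

lemma cnt_Suc: "cntNZ th (Suc k) = cntNZ th k + (if inPiZ (th k) then 0 else 1)"
proof -
  have "{i. i < Suc k \<and> \<not> inPiZ (th i)} =
     (if inPiZ (th k) then {i. i < k \<and> \<not> inPiZ (th i)} else insert k {i. i < k \<and> \<not> inPiZ (th i)})"
    by (auto simp: less_Suc_eq)
  then show ?thesis unfolding cntNZ_def by simp
qed

lemma cnt_0[simp]: "cntNZ th 0 = 0" by (simp add: cntNZ_def)

lemma cnt_mono: "m \<le> n \<Longrightarrow> cntNZ th m \<le> cntNZ th n"
  unfolding cntNZ_def by (rule card_mono) auto

lemma cnt_ivt: "j \<le> cntNZ th n \<Longrightarrow> \<exists>k\<le>n. cntNZ th k = j"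
proof (induction n)
  case 0 then show ?case by simp
next
  case (Suc n)
  show ?case
  proof (cases "j \<le> cntNZ th n")
    case True then show ?thesis using Suc.IH by (meson le_Suc_eq)
  next
    case False then have "j = cntNZ th (Suc n)" using Suc.prems cnt_Suc[of th n] by (auto split: if_splits)
    then show ?thesis by blast
  qed
qed

lemma kappa_cnt:
  assumes th0: "\<not> inPiZ (th 0)" and thN: "\<not> inPiZ (th N)"
  shows "kappa N th = cntNZ th N"
proof (cases N)
  case 0 then show ?thesis by (simp add: kappa_def)
next
  case (Suc M)
  define S where "S = {i. 1 \<le> i \<and> i < N \<and> \<not> inPiZ (th i)}"
  have f: "finite S" unfolding S_def by auto
  have e1: "{k. 1 \<le> k \<and> k \<le> N \<and> \<not> inPiZ (th k)} = insert N S"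
    unfolding S_def using thN Suc by auto
  have e2: "{i. i < N \<and> \<not> inPiZ (th i)} = insert 0 S"
    unfolding S_def using th0 Suc by auto
  have "N \<notin> S" "0 \<notin> S" unfolding S_def by auto
  then show ?thesis unfolding kappa_def cntNZ_def e1 e2 using f by simp
qed

lemma no_consec:
  assumes "th k < th (Suc k) \<and> th (Suc k) < th k + pi" "inPiZ (th k)"
  shows "\<not> inPiZ (th (Suc k))"
proof
  assume "inPiZ (th (Suc k))"
  then obtain m :: int where m: "th (Suc k) = m * pi" unfolding inPiZ_def by auto
  obtain n :: int where n: "th k = n * pi" using assms(2) unfolding inPiZ_def by auto
  have "real_of_int n * pi < real_of_int m * pi" "real_of_int m * pi < (real_of_int n + 1) * pi"
    using assms(1) m n by (auto simp: algebra_simps)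
  then have "real_of_int n < m" "real_of_int m < n + 1"
    using mult_less_cancel_right_pos[OF pi_gt_zero] by auto
  then have "n < m" "m < n + 1" by linarith+
  then show False by linarith
qed

locale kjloc =
  fixes N :: nat and th :: "nat \<Rightarrow> real"
  assumes th0: "\<not> inPiZ (th 0)" and thN: "\<not> inPiZ (th N)"
    and incr: "\<And>k. k < N \<Longrightarrow> th k < th (Suc k) \<and> th (Suc k) < th k + pi"
begin

lemma kj_props:
  assumes j: "j \<le> kappa N th"
  shows "kj N th j \<le> N" "cntNZ th (kj N th j) = j" "\<And>k. k \<le> N \<Longrightarrow> cntNZ th k = j \<Longrightarrow> k \<le> kj N th j"
proof -
  have "j \<le> cntNZ th N" using j kappa_cnt[OF th0 thN] by simp
  then obtain k where k: "k \<le> N" "cntNZ th k = j" using cnt_ivt by blast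
  have "\<And>y. y \<le> N \<and> cntNZ th y = j \<Longrightarrow> y \<le> N" by simp
  show "kj N th j \<le> N" "cntNZ th (kj N th j) = j"
    unfolding kj_def using GreatestI_nat[of "\<lambda>k. k \<le> N \<and> cntNZ th k = j" k N] k by auto
  show "\<And>k. k \<le> N \<Longrightarrow> cntNZ th k = j \<Longrightarrow> k \<le> kj N th j"
    unfolding kj_def using Greatest_le_nat[of "\<lambda>k. k \<le> N \<and> cntNZ th k = j" _ N] by auto
qed

lemma kj_eq:
  assumes "k \<le> N" "cntNZ th k = j" "\<And>k'. k' \<le> N \<Longrightarrow> cntNZ th k' = j \<Longrightarrow> k' \<le> k"
  shows "kj N th j = k"
  unfolding kj_def by (rule Greatest_equality) (use assms in auto)

lemma kj_0: "kj N th 0 = 0"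
proof (rule kj_eq)
  fix k' assume "k' \<le> N" "cntNZ th k' = 0"
  show "k' \<le> 0"
  proof (rule ccontr)
    assume "\<not> k' \<le> 0"
    then have "cntNZ th 1 \<le> cntNZ th k'" by (intro cnt_mono) auto
    moreover have "cntNZ th 1 = 1" using cnt_Suc[of th 0] th0 by simp
    ultimately show False using \<open>cntNZ th k' = 0\<close> by simp
  qed
qed auto

lemma kj_kappa: "kj N th (kappa N th) = N"
  by (rule kj_eq) (auto simp: kappa_cnt[OF th0 thN])

lemma kj_less: assumes "j < kappa N th" shows "kj N th j < N"
proof -
  have "kj N th j \<le> N" "cntNZ th (kj N th j) = j" using kj_props assms by auto
  moreover have "cntNZ th N = kappa N th" using kappa_cnt[OF th0 thN] by simp
  ultimately show ?thesis using assms by (metis le_neq_implies_less less_irrefl)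
qed

lemma kj_notpi: assumes "j \<le> kappa N th" shows "\<not> inPiZ (th (kj N th j))"
proof (cases "j = kappa N th")
  case True then show ?thesis using kj_kappa thN by simp
next
  case False
  then have jl: "j < kappa N th" using assms by simp
  have lt: "kj N th j < N" using kj_less[OF jl] .
  show ?thesis
  proof
    assume "inPiZ (th (kj N th j))"
    then have "cntNZ th (Suc (kj N th j)) = j" using cnt_Suc[of th "kj N th j"] kj_props(2)[OF assms] by simp
    then have "Suc (kj N th j) \<le> kj N th j" using kj_props(3)[OF assms] lt by simp
    then show False by simp
  qed
qed

lemma kj_step:
  assumes jl: "j < kappa N th"
  shows "(\<not> inPiZ (th (Suc (kj N th j))) \<and> kj N th (Suc j) = Suc (kj N th j)) \<or>
         (inPiZ (th (Suc (kj N th j))) \<and> Suc (kj N th j) < N \<and> kj N th (Suc j) = Suc (Suc (kj N th j)))"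
proof -
  define k where "k = kj N th j"
  have kN: "k < N" unfolding k_def using kj_less[OF jl] .
  have ck: "cntNZ th k = j" unfolding k_def using kj_props(2) jl by simp
  have nk: "\<not> inPiZ (th k)" unfolding k_def using kj_notpi jl by simp
  have c1: "cntNZ th (Suc k) = Suc j" using cnt_Suc[of th k] ck nk by simp
  show ?thesis
  proof (cases "inPiZ (th (Suc k))")
    case False
    have "kj N th (Suc j) = Suc k"
    proof (rule kj_eq)
      fix k' assume k': "k' \<le> N" "cntNZ th k' = Suc j"
      show "k' \<le> Suc k"
      proof (rule ccontr)
        assume "\<not> k' \<le> Suc k"
        then have "cntNZ th (Suc (Suc k)) \<le> cntNZ th k'" by (intro cnt_mono) auto
        moreover have "cntNZ th (Suc (Suc k)) = Suc (Suc j)" using cnt_Suc[of th "Suc k"] c1 False by simp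
        ultimately show False using k' by simp
      qed
    qed (use kN c1 in auto)
    then show ?thesis using False unfolding k_def by simp
  next
    case True
    have kN2: "Suc k < N" using True thN kN by (metis Suc_lessI)
    have n2: "\<not> inPiZ (th (Suc (Suc k)))" using no_consec[where th=th and k="Suc k", OF incr[OF kN2] True] .
    have c2: "cntNZ th (Suc (Suc k)) = Suc j" using cnt_Suc[of th "Suc k"] c1 True by simp
    have "kj N th (Suc j) = Suc (Suc k)"
    proof (rule kj_eq)
      fix k' assume k': "k' \<le> N" "cntNZ th k' = Suc j"
      show "k' \<le> Suc (Suc k)"
      proof (rule ccontr)
        assume "\<not> k' \<le> Suc (Suc k)"
        then have "cntNZ th (Suc (Suc (Suc k))) \<le> cntNZ th k'" by (intro cnt_mono) auto
        moreover have "cntNZ th (Suc (Suc (Suc k))) = Suc (Suc j)" using cnt_Suc[of th "Suc (Suc k)"] c2 n2 by simp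
        ultimately show False using k' by simp
      qed
    qed (use kN2 c2 in auto)
    then show ?thesis using True kN2 unfolding k_def by simp
  qed
qed

end


lemma cot_ne:
  assumes "sin a \<noteq> 0" "sin b \<noteq> 0" "a < b" "b < a + pi"
  shows "cot b - cot a \<noteq> 0"
proof -
  have "cot b - cot a = (cos b * sin a - cos a * sin b) / (sin a * sin b)"
    using assms by (simp add: cot_def field_simps)
  also have "cos b * sin a - cos a * sin b = - sin (b - a)" by (simp add: sin_diff algebra_simps)
  finally have e: "cot b - cot a = - sin (b - a) / (sin a * sin b)" .
  have "sin (b - a) > 0" using assms by (intro sin_gt_zero) auto
  then show ?thesis unfolding e using assms by simp
qed

lemma row_Mblk:
  assumes s: "sin t \<noteq> 0"
  shows "rowmul (1, 0) (Mblk z l t ** P) = rowmul (1, - z * of_real (l * (sin t)^2)) (St (cot t) ** P)"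
proof -
  have cs: "complex_of_real (cos t) * complex_of_real (sin t) = of_real ((sin t)^2 * cot t)"
    using sin2_cot[OF s] by (metis of_real_mult)
  have "rowmul (1, 0) (Mblk z l t) = rowmul (1, - z * of_real (l * (sin t)^2)) (St (cot t))"
    unfolding rowmul_def Mblk_def St_def
    by (simp add: mult.assoc cs)
  then show ?thesis by (metis rowmul_mult)
qed

theorem corollary4p2:
  fixes N :: nat and ell th :: "nat \<Rightarrow> real" and L :: ereal
    and z :: complex and U :: "real \<Rightarrow> complex^2^2"
  assumes ell_pos: "\<And>k. k < N \<Longrightarrow> ell k > 0"
    and th0: "th 0 = pi / 2"
    and th_incr: "\<And>k. k < N \<Longrightarrow> th k < th (Suc k) \<and> th (Suc k) < th k + pi"
    and L_gt: "ereal (xpt ell N) < L"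
    and thN: "\<not> inPiZ (th N)"
    and z_nonreal: "z \<notin> \<real>"
    and U_sol: "solves_U N ell th L z U"
  shows "((\<lambda>x. U x $ 1 $ 1 / U x $ 1 $ 2) \<longlongrightarrow> cfWT N ell th L z) (toL L)"
proof -
  have th0': "\<not> inPiZ (th 0)" unfolding inPiZ_sin th0 by simp
  have Imz: "Im z \<noteq> 0" using z_nonreal complex_is_Real_iff by auto
  define A where "A = (\<lambda>j. - complex_of_real (lj N ell th j) * z)"
  define B where "B = (\<lambda>j. complex_of_real (omegaj N th j) + complex_of_real (upsj N ell th j) * z)"
  define K where "K = kappa N th"
  interpret kjloc N th using th0' thN th_incr by unfold_locales auto
  note kjp = kj_props kj_0 kj_kappa kj_less kj_notpi kj_step
  have blk: "St (cot (th (kj N th j))) ** Pm z ell th (kj N th j) = Bg A B j" if "j \<le> K" for j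
    using that
  proof (induction j)
    case 0
    have "cot (th 0) = 0" unfolding assms(2) by (simp add: cot_def)
    then show ?case using kj_0 by (simp add: St_def mat1_mk)
  next
    case (Suc j)
    have jl: "j < kappa N th" using Suc.prems K_def by simp
    define k where "k = kj N th j"
    have kN: "k < N" unfolding k_def using kj_less[OF jl] .
    have sk: "sin (th k) \<noteq> 0" using kj_notpi[of j] jl unfolding k_def inPiZ_sin by simp
    have IH: "St (cot (th k)) ** Pm z ell th k = Bg A B j" using Suc k_def by simp
    from kj_step[OF jl] show ?case
    proof (elim disjE conjE)
      assume n1: "\<not> inPiZ (th (Suc (kj N th j)))" and k1: "kj N th (Suc j) = Suc (kj N th j)"
      have "upsj N ell th j = 0" unfolding upsj_def k1 by simp
      then have Bj: "B j = of_real (cot (th (Suc k)) - cot (th k))"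
        unfolding B_def omegaj_def k1 k_def by simp
      have Aj: "A j = - z * of_real (ell k * (sin (th k))^2)"
        unfolding A_def lj_def k_def by (simp add: algebra_simps)
      show ?thesis unfolding k1 k_def[symmetric] Pm.simps block1[OF sk] IH Bg.simps Aj Bj ..
    next
      assume pi1: "inPiZ (th (Suc (kj N th j)))" and kl: "Suc (kj N th j) < N"
        and k2: "kj N th (Suc j) = Suc (Suc (kj N th j))"
      have s1: "sin (th (Suc k)) = 0" using pi1 inPiZ_sin k_def by simp
      have "upsj N ell th j = ell (Suc k)" unfolding upsj_def k2 k_def by simp
      then have Bj: "B j = of_real (cot (th (Suc (Suc k))) - cot (th k)) + of_real (ell (Suc k)) * z"
        unfolding B_def omegaj_def k2 k_def by simp
      have Aj: "A j = - z * of_real (ell k * (sin (th k))^2)"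
        unfolding A_def lj_def k_def by (simp add: algebra_simps)
      show ?thesis unfolding k2 k_def[symmetric] Pm.simps block2[OF sk s1] IH Bg.simps Aj Bj by simp
    qed
  qed
  define Q where "Q = Bg A B K"
  have QP: "Q = St (cot (th N)) ** Pm z ell th N"
    using blk[of K] kj_kappa unfolding Q_def K_def by simp
  have sN: "sin (th N) \<noteq> 0" using thN inPiZ_sin by simp
  define s2 where "s2 = (sin (th N))^2"
  have s2p: "s2 > 0" unfolding s2_def using sN by simp
  define xN where "xN = xpt ell N"
  have rowU: "U x $ 1 $ 1 = fst (rowmul (1, - z * of_real ((x - xN) * s2)) Q) \<and>
              U x $ 1 $ 2 = snd (rowmul (1, - z * of_real ((x - xN) * s2)) Q)"
    if "xN \<le> x" "ereal x < L" for x
  proof -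
    have "U x = Mblk z (x - xN) (th N) ** Pm z ell th N"
      unfolding xN_def by (rule U_last[OF ell_pos L_gt U_sol]) (use that xN_def in auto)
    then have "rowmul (1, 0) (U x) = rowmul (1, - z * of_real ((x - xN) * s2)) Q"
      unfolding QP s2_def by (simp add: row_Mblk[OF sN])
    then show ?thesis by (simp add: rowmul_def prod_eq_iff)
  qed
  have condA: "Im (A i) * Im z < 0" if "i < K" for i
  proof -
    have "kj N th i < N" using kj_less that K_def by simp
    then have "ell (kj N th i) > 0" using ell_pos by simp
    moreover have "sin (th (kj N th i)) \<noteq> 0" using kj_notpi[of i] that K_def inPiZ_sin by simp
    ultimately have "lj N ell th i > 0" unfolding lj_def by simp
    moreover have "Im z * Im z > 0" using Imz by (simp add: zero_less_mult_iff) linarith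
    ultimately show ?thesis unfolding A_def by (simp add: mult.assoc)
  qed
  have condB: "B i \<noteq> 0 \<and> Im (B i) * Im z \<ge> 0" if "i < K" for i
  proof -
    have il: "i < kappa N th" using that K_def by simp
    define k where "k = kj N th i"
    have kN: "k < N" unfolding k_def using kj_less[OF il] .
    have sk: "sin (th k) \<noteq> 0" using kj_notpi[of i] il unfolding k_def inPiZ_sin by simp
    from kj_step[OF il] show ?thesis
    proof (elim disjE conjE)
      assume n1: "\<not> inPiZ (th (Suc (kj N th i)))" and k1: "kj N th (Suc i) = Suc (kj N th i)"
      have "upsj N ell th i = 0" unfolding upsj_def k1 by simp
      then have Bj: "B i = of_real (cot (th (Suc k)) - cot (th k))"
        unfolding B_def omegaj_def k1 k_def by simp
      have "cot (th (Suc k)) - cot (th k) \<noteq> 0"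
        by (rule cot_ne) (use sk n1 th_incr[OF kN] inPiZ_sin k_def in auto)
      then show ?thesis unfolding Bj by simp
    next
      assume pi1: "inPiZ (th (Suc (kj N th i)))" and kl: "Suc (kj N th i) < N"
        and k2: "kj N th (Suc i) = Suc (Suc (kj N th i))"
      have "upsj N ell th i = ell (Suc k)" unfolding upsj_def k2 k_def by simp
      moreover have "ell (Suc k) > 0" using ell_pos kl k_def by simp
      ultimately have "Im (B i) = ell (Suc k) * Im z" "ell (Suc k) > 0" unfolding B_def by simp_all
      then show ?thesis using Imz by (auto simp: mult.assoc)
    qed
  qed
  have cf: "cfWT N ell th L z = contfrac A B (lastTerm N ell th L z) K"
    unfolding cfWT_def A_def B_def K_def ..
  show ?thesis
  proof (cases L)
    case (real Lr)
    have Lr: "xN < Lr" using L_gt real xN_def by simp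
    define lk where "lk = (Lr - xN) * s2"
    have lkp: "lk > 0" unfolding lk_def using Lr s2p by simp
    have lt: "lastTerm N ell th L z = 1 / (- z * of_real lk)"
      unfolding lastTerm_def real lk_def s2_def xN_def by (simp add: mult.commute)
    have "snd (rowmul (1, - z * of_real lk) Q) \<noteq> 0 \<and>
       fst (rowmul (1, - z * of_real lk) Q) / snd (rowmul (1, - z * of_real lk) Q) = contfrac A B (1 / (- z * of_real lk)) K"
    proof (unfold Q_def, rule cf_lemma)
      show "- z * complex_of_real lk \<noteq> 0" using lkp Imz by auto
      have "Im (1 / (- z * complex_of_real lk)) * Im z = lk * (Im z)^2 / (cmod (- z * complex_of_real lk))^2"
        unfolding Im_inverse_sign by (simp add: power2_eq_square)
      moreover have "cmod (- z * complex_of_real lk) > 0" using lkp Imz by auto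
      ultimately show "Im (1 / (- z * complex_of_real lk)) * Im z > 0 \<or> 1 / (- z * complex_of_real lk) = 0"
        using lkp Imz by simp
    qed (use condA condB in auto)
    then have den: "(U $ 1 $ 2 \<noteq> 0) = (U $ 1 $ 2 \<noteq> 0)" for U :: "complex^2^2" by simp
    have main: "((\<lambda>x. (Q$1$1 + (- z * of_real ((x - xN) * s2)) * Q$2$1) / (Q$1$2 + (- z * of_real ((x - xN) * s2)) * Q$2$2))
        \<longlongrightarrow> (Q$1$1 + (- z * of_real ((Lr - xN) * s2)) * Q$2$1) / (Q$1$2 + (- z * of_real ((Lr - xN) * s2)) * Q$2$2)) (at_left Lr)"
      using \<open>snd (rowmul (1, - z * of_real lk) Q) \<noteq> 0 \<and> _\<close> unfolding lk_def rowmul_def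
      by (intro tendsto_intros) auto
    have ev: "eventually (\<lambda>x. (Q$1$1 + (- z * of_real ((x - xN) * s2)) * Q$2$1) / (Q$1$2 + (- z * of_real ((x - xN) * s2)) * Q$2$2)
              = U x $ 1 $ 1 / U x $ 1 $ 2) (at_left Lr)"
    proof -
      have "eventually (\<lambda>x. x \<in> {xN<..<Lr}) (at_left Lr)" by (rule eventually_at_left_real[OF Lr])
      then show ?thesis
      proof eventually_elim
        case (elim x)
        then show ?case using rowU[of x] real by (simp add: rowmul_def)
      qed
    qed
    have "((\<lambda>x. U x $ 1 $ 1 / U x $ 1 $ 2) \<longlongrightarrow> contfrac A B (1 / (- z * of_real lk)) K) (at_left Lr)"
      using Lim_transform_eventually[OF main ev] \<open>snd (rowmul (1, - z * of_real lk) Q) \<noteq> 0 \<and> _\<close>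
      unfolding lk_def rowmul_def by simp
    then show ?thesis unfolding toL_def cf lt using real by simp
  next
    case PInf
    have lt: "lastTerm N ell th L z = 0" unfolding lastTerm_def PInf by simp
    have cfl: "snd (rowmul (0, 1) Q) \<noteq> 0 \<and>
       fst (rowmul (0, 1) Q) / snd (rowmul (0, 1) Q) = contfrac A B 0 K"
      unfolding Q_def by (rule cf_lemma) (use condA condB in auto)
    define e where "e = (\<lambda>x. - (1 / z) * of_real (inverse ((x - xN) * s2)))"
    have lim0: "((\<lambda>x. inverse ((x - xN) * s2)) \<longlongrightarrow> 0) at_top"
    proof (rule tendsto_inverse_0_at_top)
      have "filterlim (\<lambda>x. - xN + x) at_top at_top"
        by (rule filterlim_tendsto_add_at_top[OF tendsto_const filterlim_ident])
      then have "filterlim (\<lambda>x. s2 * (- xN + x)) at_top at_top"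
        by (rule filterlim_tendsto_pos_mult_at_top[OF tendsto_const s2p])
      then show "filterlim (\<lambda>x. (x - xN) * s2) at_top at_top" by (simp add: algebra_simps)
    qed
    have e0: "(e \<longlongrightarrow> 0) at_top" unfolding e_def
      using tendsto_mult[OF tendsto_const tendsto_of_real[OF lim0], of "- (1/z)"] by simp
    have main: "((\<lambda>x. (Q$1$1 * e x + Q$2$1) / (Q$1$2 * e x + Q$2$2)) \<longlongrightarrow> (Q$1$1 * 0 + Q$2$1) / (Q$1$2 * 0 + Q$2$2)) at_top"
      using cfl unfolding rowmul_def by (intro tendsto_intros e0) auto
    have ev: "eventually (\<lambda>x. (Q$1$1 * e x + Q$2$1) / (Q$1$2 * e x + Q$2$2) = U x $ 1 $ 1 / U x $ 1 $ 2) at_top"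
      using eventually_gt_at_top[of xN]
    proof eventually_elim
      case (elim x)
      define w where "w = - z * of_real ((x - xN) * s2)"
      have w0: "w \<noteq> 0" unfolding w_def using elim s2p Imz by auto
      have ew: "e x = 1 / w" unfolding e_def w_def
        by (simp only: divide_inverse inverse_mult_distrib of_real_inverse inverse_minus_eq mult_1_left) (simp add: mult.commute)
      have "U x $ 1 $ 1 / U x $ 1 $ 2 = (Q$1$1 + w * Q$2$1) / (Q$1$2 + w * Q$2$2)"
        using rowU[of x] PInf elim unfolding w_def by (simp add: rowmul_def)
      also have "\<dots> = (Q$1$1 * e x + Q$2$1) / (Q$1$2 * e x + Q$2$2)"
      proof -
        have "(Q$1$1 * (1/w) + Q$2$1) / (Q$1$2 * (1/w) + Q$2$2)
            = (w * (Q$1$1 * (1/w) + Q$2$1)) / (w * (Q$1$2 * (1/w) + Q$2$2))"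
          using w0 by simp
        also have "\<dots> = (Q$1$1 + w * Q$2$1) / (Q$1$2 + w * Q$2$2)"
          using w0 by (simp add: distrib_left)
        finally show ?thesis unfolding ew by simp
      qed
      finally show ?case by simp
    qed
    have "((\<lambda>x. U x $ 1 $ 1 / U x $ 1 $ 2) \<longlongrightarrow> contfrac A B 0 K) at_top"
      using Lim_transform_eventually[OF main ev] cfl unfolding rowmul_def by simp
    then show ?thesis unfolding toL_def cf lt using PInf by simp
  next
    case MInf
    then show ?thesis using L_gt by simp
  qed
qed


end
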